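(* The sequence $\{H_n\}_{n\ge1}$ satisfies the Large Deviation Principle on $[0,1]$ with a good rate function. More precisely, for every continuous bounded $g:[0,1]\to\mathbb R$ the limit $\Gamma_g=\lim_{n\to\infty}\frac1n\log\mathbb{E}\big(e^{n g(H_n/n)}\big)$ exists, and with $$R(x)=\sup_{g\in\mathcal C_b([0,1])}\{g(x)-\Gamma_g\},\qquad x\in[0,1],$$ $R$ is a good rate function and: for every closed $F\subseteq[0,1]$, $\limsup_{n\to\infty}\frac1n\log\mathbb P(H_n/n\in F)\le-\inf_{x\in F}R(x)$; for every open $G\subseteq[0,1]$ (in the relative topology), $\liminf_{n\to\infty}\frac1n\log\mathbb P(H_n/n\in G)\ge-\inf_{x\in G}R(x)$.
   Context: Standing setup (discrete-time Hawkes process, DTHP). Let $(a_i)_{i=0}^\infty$ be a sequence of strictly positive real numbers with $\sum_{i=0}^\infty a_i<1$ and $\sum_{i=1}^\infty i\,a_i<\infty$. The arrival process $\{\xi_n\}_{n\ge1}$ is a sequence of $\{0,1\}$-valued random variables on a probability space $(\Omega,\mathcal F,\mathbb P)$ with $\mathbb{P}(\xi_1=1)=a_0$, $\mathbb P(\xi_1=0)=1-a_0$, and for $n\ge2$, $$\mathbb{P}(\xi_n=1\mid \xi_1,\dots,\xi_{n-1})=a_0+\sum_{i=1}^{n-1}a_{n-i}\xi_i,\qquad \mathbb{P}(\xi_n=0\mid \xi_1,\dots,\xi_{n-1})=1-\Big(a_0+\sum_{i=1}^{n-1}a_{n-i}\xi_i\Big).$$ The DTHP is $H_n=\sum_{i=1}^n\xi_i$,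 and $\mathcal F_n=\sigma(\xi_1,\dots,\xi_n)$. A rate function is a lower semicontinuous $I:[0,1]\to[0,\infty]$; it is good if its sublevel sets are compact. $\mathcal C_b([0,1])$ denotes the bounded continuous real functions on $[0,1]$. *)

theory Defs
  imports "HOL-Probability.Probability"
begin

definition elog :: "real \<Rightarrow> ereal" where
  "elog p = (if p \<le> 0 then -\<infinity> else ereal (ln p))"

definition rate_function :: "(real \<Rightarrow> ereal) \<Rightarrow> bool" where
  "rate_function I \<longleftrightarrow> (\<forall>x\<in>{0..1}. I x \<ge> 0) \<and>
     (\<forall>c::real. closedin (top_of_set {0..1}) {x\<in>{0..1}. I x \<le> ereal c})"

definition good_rate_function :: "(real \<Rightarrow> ereal) \<Rightarrow> bool" where
  "good_rate_function I \<longleftrightarrow> rate_function I \<and>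
     (\<forall>c::real. compact {x\<in>{0..1}. I x \<le> ereal c})"

end

theory Submission
  imports Defs
begin


definition rt :: "(nat \<Rightarrow> real) \<Rightarrow> nat \<Rightarrow> (nat \<Rightarrow> nat) \<Rightarrow> real" where
  "rt a n x = a 0 + (\<Sum>i=1..n-1. a (n - i) * real (x i))"
definition qf :: "(nat \<Rightarrow> real) \<Rightarrow> nat \<Rightarrow> (nat \<Rightarrow> nat) \<Rightarrow> real" where
  "qf a n x = (if x n = 1 then rt a n x else 1 - rt a n x)"
definition pp :: "(nat \<Rightarrow> real) \<Rightarrow> nat \<Rightarrow> (nat \<Rightarrow> nat) \<Rightarrow> real" where
  "pp a n x = (\<Prod>j=1..n. qf a j x)"
definition paths :: "nat \<Rightarrow> (nat \<Rightarrow> nat) set" where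
  "paths n = {x. (\<forall>i. x i \<in> {0,1}) \<and> (\<forall>i. x i \<noteq> 0 \<longrightarrow> i \<in> {1..n})}"
definition hs :: "nat \<Rightarrow> (nat \<Rightarrow> nat) \<Rightarrow> nat" where
  "hs n x = (\<Sum>i=1..n. x i)"
definition cc :: "nat \<Rightarrow> (nat \<Rightarrow> nat) \<Rightarrow> (nat \<Rightarrow> nat) \<Rightarrow> nat \<Rightarrow> nat" where
  "cc k y z = (\<lambda>i. if i \<le> k then y i else z (i - k))"

lemma finite_paths: "finite (paths n)"
proof (rule inj_on_finite[where f="\<lambda>x. {i. x i = 1}" and B="Pow {1..n}"])
  show "inj_on (\<lambda>x. {i. x i = 1}) (paths n)"
  proof (rule inj_onI)
    fix x y assume x: "x \<in> paths n" and y: "y \<in> paths n" and e: "{i. x i = 1} = {i. y i = 1}"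
    show "x = y"
    proof
      fix i
      have "x i = 1 \<longleftrightarrow> y i = 1" using e by blast
      moreover have "x i \<in> {0,1}" "y i \<in> {0,1}" using x y by (auto simp: paths_def)
      ultimately show "x i = y i" by auto
    qed
  qed
  show "(\<lambda>x. {i. x i = 1}) ` paths n \<subseteq> Pow {1..n}"
    by (auto simp: paths_def)
qed auto

lemma hs_le: "x \<in> paths n \<Longrightarrow> hs n x \<le> n"
proof -
  assume x: "x \<in> paths n"
  have "hs n x \<le> (\<Sum>i=1..n. 1)" unfolding hs_def
  proof (rule sum_mono)
    fix i have "x i \<in> {0,1}" using x by (auto simp: paths_def)
    then show "x i \<le> 1" by auto
  qed
  then show ?thesis by simp
qed

locale dpar =
  fixes a :: "nat \<Rightarrow> real"
  assumes a_pos: "\<And>i. a i > 0"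
    and a_summ: "summable a" and a_lt1: "suminf a < 1"
    and a_mom: "summable (\<lambda>i. real i * a i)"
begin

definition "sa = suminf a"
definition "c0 = min (a 0) (1 - sa)"
definition "tlr l = suminf (\<lambda>i. if l \<le> i then a i else 0)"
definition "TT = suminf (\<lambda>i. real i * a i)"
definition "kap = TT / (1 - sa)"

lemma sa_lt1: "sa < 1" using a_lt1 by (simp add: sa_def)
lemma c0_pos: "c0 > 0" using a_pos[of 0] sa_lt1 by (simp add: c0_def)
lemma sa_nonneg: "sa \<ge> 0" unfolding sa_def
  by (rule suminf_nonneg[OF a_summ]) (simp add: less_imp_le[OF a_pos])
lemma c0_le1: "c0 \<le> 1" using sa_nonneg by (simp add: c0_def)

lemma summ_tl: "summable (\<lambda>i. if l \<le> i then a i else 0)"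
  by (rule summable_comparison_test'[OF a_summ]) (auto simp: less_imp_le[OF a_pos])

lemma sum_le_sa: "finite S \<Longrightarrow> sum a S \<le> sa"
  unfolding sa_def by (rule sum_le_suminf[OF a_summ]) (auto simp: less_imp_le[OF a_pos])

lemma sum_le_tl: "finite S \<Longrightarrow> S \<subseteq> {l..} \<Longrightarrow> sum a S \<le> tlr l"
proof -
  assume S: "finite S" "S \<subseteq> {l..}"
  have "sum a S = sum (\<lambda>i. if l \<le> i then a i else 0) S"
    by (rule sum.cong) (use S in auto)
  also have "\<dots> \<le> tlr l" unfolding tlr_def
    by (rule sum_le_suminf[OF summ_tl S(1)]) (auto simp: less_imp_le[OF a_pos])
  finally show ?thesis .
qed

lemma sum_tl_le: "(\<Sum>t=1..m. tlr t) \<le> TT"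
proof -
  have "(\<Sum>t=1..m. tlr t) = (\<Sum>i. \<Sum>t=1..m. (if t \<le> i then a i else 0))"
    by (simp add: tlr_def suminf_sum summ_tl)
  also have "\<dots> \<le> TT" unfolding TT_def
  proof (rule suminf_le)
    fix i
    have e: "(\<Sum>t=1..m. (if t \<le> i then a i else 0)) = (\<Sum>t\<in>{1..min m i}. a i)"
      by (rule sum.mono_neutral_cong_right) auto
    have "real (min m i) * a i \<le> real i * a i"
      using a_pos[of i] by (intro mult_right_mono) auto
    then show "(\<Sum>t=1..m. (if t \<le> i then a i else 0)) \<le> real i * a i" using e by simp
  next
    show "summable (\<lambda>i. \<Sum>t = 1..m. if t \<le> i then a i else 0)"
      by (rule summable_sum) (rule summ_tl)
  qed (rule a_mom)
  finally show ?thesis .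
qed

lemma tlr_nonneg: "tlr l \<ge> 0"
  unfolding tlr_def by (rule suminf_nonneg[OF summ_tl]) (simp add: less_imp_le[OF a_pos])

lemma TT_nonneg: "TT \<ge> 0"
  unfolding TT_def by (rule suminf_nonneg[OF a_mom]) (simp add: less_imp_le[OF a_pos])


lemma rt_ge: "(\<forall>i. x i \<in> {0,1}) \<Longrightarrow> a 0 \<le> rt a n x"
  unfolding rt_def by (auto intro!: sum_nonneg simp: less_imp_le[OF a_pos])

lemma rt_le: "(\<forall>i. x i \<in> {0,1}) \<Longrightarrow> rt a n x \<le> sa"
proof -
  assume x: "\<forall>i. x i \<in> {0,1}"
  have "(\<Sum>i=1..n-1. a (n - i) * real (x i)) \<le> (\<Sum>i=1..n-1. a (n - i))"
  proof (rule sum_mono)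
    fix i have "real (x i) \<le> 1" using x[rule_format, of i] by auto
    then show "a (n - i) * real (x i) \<le> a (n - i)"
      using a_pos[of "n-i"] by (simp add: mult_left_le)
  qed
  also have "\<dots> = sum a ((\<lambda>i. n - i) ` {1..n-1})"
    by (rule sum.reindex[symmetric, unfolded comp_def]) (auto simp: inj_on_def)
  finally have "rt a n x \<le> a 0 + sum a ((\<lambda>i. n - i) ` {1..n-1})" by (simp add: rt_def)
  also have "\<dots> = sum a (insert 0 ((\<lambda>i. n - i) ` {1..n-1}))"
    by (subst sum.insert) auto
  also have "\<dots> \<le> sa" by (rule sum_le_sa) auto
  finally show ?thesis .
qed

lemma qf_ge: "(\<forall>i. x i \<in> {0,1}) \<Longrightarrow> c0 \<le> qf a n x"
  using rt_ge[of x n] rt_le[of x n] by (auto simp: qf_def c0_def)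

lemma qf_le: "(\<forall>i. x i \<in> {0,1}) \<Longrightarrow> qf a n x \<le> 1"
  using rt_ge[of x n] rt_le[of x n] a_pos[of 0] sa_nonneg sa_lt1 by (auto simp: qf_def)

lemma pp_ge: "(\<forall>i. x i \<in> {0,1}) \<Longrightarrow> c0 ^ n \<le> pp a n x"
proof -
  assume x: "\<forall>i. x i \<in> {0,1}"
  have "(\<Prod>j=1..n. c0) \<le> pp a n x" unfolding pp_def
    by (rule prod_mono) (use qf_ge[OF x] c0_pos in \<open>auto simp: less_imp_le\<close>)
  then show ?thesis by simp
qed

lemma pp_nonneg: "(\<forall>i. x i \<in> {0,1}) \<Longrightarrow> 0 \<le> pp a n x"
  using pp_ge[of x n] c0_pos by (smt (verit) zero_less_power)

lemma paths_01: "x \<in> paths n \<Longrightarrow> \<forall>i. x i \<in> {0,1}"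
  by (simp add: paths_def)

lemma cc_paths: "y \<in> paths k \<Longrightarrow> z \<in> paths m \<Longrightarrow> cc k y z \<in> paths (k+m)"
proof -
  assume y: "y \<in> paths k" and z: "z \<in> paths m"
  show ?thesis unfolding paths_def
  proof (intro CollectI conjI allI impI)
    fix i show "cc k y z i \<in> {0,1}" using y z by (simp add: paths_def cc_def)
  next
    fix i assume nz: "cc k y z i \<noteq> 0"
    show "i \<in> {1..k+m}"
    proof (cases "i \<le> k")
      case True
      then have "y i \<noteq> 0" using nz by (simp add: cc_def)
      then have "i \<in> {1..k}" using y by (simp add: paths_def)
      then show ?thesis by simp
    next
      case False
      then have "z (i - k) \<noteq> 0" using nz by (simp add: cc_def)
      then have "i - k \<in> {1..m}" using z by (simp add: paths_def)
      then show ?thesis using False by auto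
    qed
  qed
qed

lemma cc_inj: "inj_on (\<lambda>(y,z). cc k y z) (paths k \<times> paths m)"
proof (rule inj_onI, clarsimp)
  fix y z y' z'
  assume y: "y \<in> paths k" and z: "z \<in> paths m" and y': "y' \<in> paths k" and z': "z' \<in> paths m"
    and e: "cc k y z = cc k y' z'"
  show "y = y' \<and> z = z'"
  proof
    show "y = y'"
    proof
      fix i show "y i = y' i"
      proof (cases "i \<le> k")
        case True then show ?thesis using fun_cong[OF e, of i] by (simp add: cc_def)
      next
        case False
        have "y i = 0" using y False unfolding paths_def by force
        moreover have "y' i = 0" using y' False unfolding paths_def by force
        ultimately show ?thesis by simp
      qed
    qed
    show "z = z'"
    proof
      fix i show "z i = z' i"
      proof (cases "i = 0")
        case True
        have "z i = 0" using z True unfolding paths_def by force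
        moreover have "z' i = 0" using z' True unfolding paths_def by force
        ultimately show ?thesis by simp
      next
        case False then show ?thesis using fun_cong[OF e, of "i+k"] by (simp add: cc_def)
      qed
    qed
  qed
qed

lemma hs_cc: "hs (k+m) (cc k y z) = hs k y + hs m z"
proof -
  have "hs (k+m) (cc k y z) = (\<Sum>i\<in>{1..k} \<union> {k+1..k+m}. cc k y z i)"
    unfolding hs_def by (rule sum.cong) auto
  also have "\<dots> = (\<Sum>i\<in>{1..k}. cc k y z i) + (\<Sum>i\<in>{1+k..m+k}. cc k y z i)"
    by (subst sum.union_disjoint) (auto simp: add.commute)
  also have "(\<Sum>i\<in>{1+k..m+k}. cc k y z i) = (\<Sum>i\<in>{1..m}. cc k y z (i + k))"
    by (rule sum.shift_bounds_cl_nat_ivl)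
  also have "\<dots> = hs m z" unfolding hs_def by (rule sum.cong) (auto simp: cc_def)
  also have "(\<Sum>i\<in>{1..k}. cc k y z i) = hs k y" unfolding hs_def by (rule sum.cong) (auto simp: cc_def)
  finally show ?thesis .
qed

lemma rt_cc_low: "j \<le> k \<Longrightarrow> rt a j (cc k y z) = rt a j y"
  unfolding rt_def by (intro arg_cong2[where f="(+)"] refl sum.cong) (auto simp: cc_def)

lemma qf_cc_low: "j \<le> k \<Longrightarrow> qf a j (cc k y z) = qf a j y"
  using rt_cc_low[of j k y z] by (simp add: qf_def cc_def)

lemma rt_cc_high: "1 \<le> t \<Longrightarrow> rt a (k+t) (cc k y z) = (\<Sum>i=1..k. a (k + t - i) * real (y i)) + rt a t z"
proof -
  assume t: "1 \<le> t"
  let ?f = "\<lambda>i. a (k + t - i) * real (cc k y z i)"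
  have "(\<Sum>i=1..k+t-1. ?f i) = (\<Sum>i\<in>{1..k} \<union> {1+k..(t-1)+k}. ?f i)"
    by (rule sum.cong) (use t in auto)
  also have "\<dots> = (\<Sum>i\<in>{1..k}. ?f i) + (\<Sum>i\<in>{1+k..(t-1)+k}. ?f i)"
    by (subst sum.union_disjoint) auto
  also have "(\<Sum>i\<in>{1+k..(t-1)+k}. ?f i) = (\<Sum>i\<in>{1..t-1}. ?f (i + k))"
    by (rule sum.shift_bounds_cl_nat_ivl)
  also have "\<dots> = (\<Sum>i\<in>{1..t-1}. a (t - i) * real (z i))"
    by (rule sum.cong) (auto simp: cc_def)
  also have "(\<Sum>i\<in>{1..k}. ?f i) = (\<Sum>i=1..k. a (k + t - i) * real (y i))"
    by (rule sum.cong) (auto simp: cc_def)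
  finally show ?thesis by (simp add: rt_def)
qed

lemma qf_cc_high:
  assumes y: "\<forall>i. y i \<in> {0,1}" and z: "\<forall>i. z i \<in> {0,1}" and t: "1 \<le> t"
  shows "exp (- tlr t / (1 - sa)) * qf a t z \<le> qf a (k+t) (cc k y z)"
proof -
  define d where "d = (\<Sum>i=1..k. a (k + t - i) * real (y i))"
  define r where "r = rt a t z"
  have w: "\<forall>i. cc k y z i \<in> {0,1}" using y z by (simp add: cc_def)
  have rt: "rt a (k+t) (cc k y z) = d + r" using rt_cc_high[OF t] by (simp add: d_def r_def)
  have d0: "0 \<le> d" unfolding d_def using y a_pos by (auto intro!: sum_nonneg simp: less_imp_le)
  have "d \<le> (\<Sum>i=1..k. a (k + t - i))" unfolding d_def
  proof (rule sum_mono)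
    fix i have "real (y i) \<le> 1" using y[rule_format, of i] by auto
    then show "a (k + t - i) * real (y i) \<le> a (k + t - i)"
      using a_pos[of "k+t-i"] by (simp add: mult_left_le)
  qed
  also have "\<dots> = sum a ((\<lambda>i. k + t - i) ` {1..k})"
    by (rule sum.reindex[symmetric, unfolded comp_def]) (auto simp: inj_on_def)
  also have "\<dots> \<le> tlr t" by (rule sum_le_tl) auto
  finally have dt: "d \<le> tlr t" .
  have r0: "0 \<le> r" using rt_ge[OF z, of t] a_pos[of 0] by (simp add: r_def)
  have drs: "d + r \<le> sa" using rt_le[OF w, of "k+t"] rt by simp
  have e1: "exp (- tlr t / (1 - sa)) \<le> 1" using sa_lt1 tlr_nonneg by simp
  have cct: "cc k y z (k+t) = z t" using t by (simp add: cc_def)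
  show ?thesis
  proof (cases "z t = 1")
    case True
    have "exp (- tlr t / (1 - sa)) * r \<le> r" using e1 r0 by (simp add: mult_left_le_one_le)
    then show ?thesis using True cct rt d0 by (simp add: qf_def r_def[symmetric])
  next
    case False
    have q1: "qf a t z = 1 - r" using False by (simp add: qf_def r_def)
    have q2: "qf a (k+t) (cc k y z) = 1 - (d + r)" using False cct rt by (simp add: qf_def)
    have pos: "0 < 1 - sa" using sa_lt1 by simp
    have "1 - r \<le> (1 - (d + r)) * (1 + tlr t / (1 - sa))"
    proof -
      have "d \<le> (1 - (d + r)) * (tlr t / (1 - sa))"
      proof -
        have "d \<le> tlr t" by (rule dt)
        also have "tlr t = (1 - sa) * (tlr t / (1 - sa))" using pos by simp
        also have "\<dots> \<le> (1 - (d + r)) * (tlr t / (1 - sa))"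
          by (rule mult_right_mono) (use drs tlr_nonneg pos in auto)
        finally show ?thesis .
      qed
      then show ?thesis by (simp add: algebra_simps)
    qed
    also have "\<dots> \<le> (1 - (d + r)) * exp (tlr t / (1 - sa))"
      by (rule mult_left_mono) (use drs sa_lt1 exp_ge_add_one_self in \<open>auto simp: add.commute\<close>)
    finally have "exp (- tlr t / (1 - sa)) * (1 - r) \<le> 1 - (d + r)"
      by (simp add: exp_minus field_simps)
    then show ?thesis using q1 q2 by simp
  qed
qed


lemma pp_cc:
  assumes y: "y \<in> paths k" and z: "z \<in> paths m"
  shows "exp (- kap) * pp a k y * pp a m z \<le> pp a (k+m) (cc k y z)"
proof -
  let ?w = "cc k y z"
  have y01: "\<forall>i. y i \<in> {0,1}" and z01: "\<forall>i. z i \<in> {0,1}" using y z by (auto simp: paths_def)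
  have "pp a (k+m) ?w = (\<Prod>j\<in>{1..k} \<union> {1+k..m+k}. qf a j ?w)"
    unfolding pp_def by (rule prod.cong) auto
  also have "\<dots> = (\<Prod>j\<in>{1..k}. qf a j ?w) * (\<Prod>j\<in>{1+k..m+k}. qf a j ?w)"
    by (subst prod.union_disjoint) auto
  also have "(\<Prod>j\<in>{1..k}. qf a j ?w) = pp a k y"
    unfolding pp_def by (rule prod.cong) (auto simp: qf_cc_low)
  also have "(\<Prod>j\<in>{1+k..m+k}. qf a j ?w) = (\<Prod>t\<in>{1..m}. qf a (t+k) ?w)"
    by (rule prod.shift_bounds_cl_nat_ivl)
  finally have e: "pp a (k+m) ?w = pp a k y * (\<Prod>t\<in>{1..m}. qf a (k+t) ?w)" by (simp add: add.commute)
  have "(\<Prod>t\<in>{1..m}. exp (- tlr t / (1 - sa)) * qf a t z) \<le> (\<Prod>t\<in>{1..m}. qf a (k+t) ?w)"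
  proof (rule prod_mono)
    fix t assume t: "t \<in> {1..m}"
    have "0 \<le> qf a t z" using qf_ge[OF z01, of t] c0_pos by linarith
    then show "0 \<le> exp (- tlr t / (1 - sa)) * qf a t z \<and> exp (- tlr t / (1 - sa)) * qf a t z \<le> qf a (k+t) ?w"
      using qf_cc_high[OF y01 z01, of t k] t by auto
  qed
  moreover have "(\<Prod>t\<in>{1..m}. exp (- tlr t / (1 - sa)) * qf a t z) = exp (- (\<Sum>t\<in>{1..m}. tlr t) / (1 - sa)) * pp a m z"
    by (simp add: prod.distrib pp_def exp_sum[symmetric] sum_negf sum_divide_distrib)
  moreover have "exp (- kap) \<le> exp (- (\<Sum>t\<in>{1..m}. tlr t) / (1 - sa))"
    using sum_tl_le[of m] sa_lt1 unfolding kap_def by (simp add: divide_right_mono)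
  ultimately have "exp (- kap) * pp a m z \<le> (\<Prod>t\<in>{1..m}. qf a (k+t) ?w)"
    using pp_nonneg[OF z01, of m] by (smt (verit) mult_right_mono)
  then have "pp a k y * (exp (- kap) * pp a m z) \<le> pp a k y * (\<Prod>t\<in>{1..m}. qf a (k+t) ?w)"
    by (rule mult_left_mono) (rule pp_nonneg[OF y01])
  then show ?thesis using e by (simp add: algebra_simps)
qed

definition "Pd A n = (\<Sum>x\<in>paths n. if real (hs n x) / real n \<in> A then pp a n x else 0)"
definition "Zd g n = (\<Sum>x\<in>paths n. exp (real n * g (real (hs n x) / real n)) * pp a n x)"

lemma Pd_nonneg: "0 \<le> Pd A n"
  unfolding Pd_def by (rule sum_nonneg) (simp add: pp_nonneg[OF paths_01])

lemma conv_aux: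
  fixes p q k m al :: real
  assumes "0 < k" "0 < m" "al < p / k" "al < q / m"
  shows "al < (p + q) / (k + m)"
proof -
  have "al * k < p" "al * m < q" using assms by (simp_all add: field_simps)
  then have "al * (k + m) < p + q" by (simp add: algebra_simps)
  then show ?thesis using assms by (simp add: field_simps)
qed

lemma conv_aux2:
  fixes p q k m be :: real
  assumes "0 < k" "0 < m" "p / k < be" "q / m < be"
  shows "(p + q) / (k + m) < be"
  using conv_aux[of k m "-be" "-p" "-q"] assms by (simp add: field_simps)

lemma Pd_super:
  assumes k: "1 \<le> k" and m: "1 \<le> m"
  shows "exp (- kap) * Pd {al<..<be} k * Pd {al<..<be} m \<le> Pd {al<..<be} (k+m)"
proof -
  let ?A = "{al<..<be}"
  define F where "F n x = (if real (hs n x) / real n \<in> ?A then pp a n x else 0)" for n x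
  have F0: "0 \<le> F n x" if "x \<in> paths n" for n x
    using pp_nonneg[OF paths_01[OF that]] by (simp add: F_def)
  have "Pd ?A k * Pd ?A m = (\<Sum>(y,z)\<in>paths k \<times> paths m. F k y * F m z)"
    unfolding Pd_def F_def[symmetric] by (simp add: sum_product sum.cartesian_product)
  then have "exp (- kap) * Pd ?A k * Pd ?A m = (\<Sum>(y,z)\<in>paths k \<times> paths m. exp (- kap) * (F k y * F m z))"
    by (simp add: sum_distrib_left case_prod_beta mult.assoc)
  also have "\<dots> \<le> (\<Sum>(y,z)\<in>paths k \<times> paths m. F (k+m) (cc k y z))"
  proof (rule sum_mono, clarify)
    fix y z assume y: "y \<in> paths k" and z: "z \<in> paths m"
    show "exp (- kap) * (F k y * F m z) \<le> F (k+m) (cc k y z)"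
    proof (cases "real (hs k y) / real k \<in> ?A \<and> real (hs m z) / real m \<in> ?A")
      case True
      have "real (hs (k+m) (cc k y z)) / real (k+m) \<in> ?A"
        using True conv_aux[of "real k" "real m" al] conv_aux2[of "real k" "real m" _ be] k m
        by (auto simp: hs_cc)
      then show ?thesis using True pp_cc[OF y z] by (simp add: F_def mult.assoc)
    next
      case False
      then show ?thesis using F0[OF cc_paths[OF y z]] by (auto simp: F_def)
    qed
  qed
  also have "\<dots> = (\<Sum>x\<in>(\<lambda>(y,z). cc k y z) ` (paths k \<times> paths m). F (k+m) x)"
    by (subst sum.reindex[OF cc_inj]) (simp add: case_prod_beta comp_def)
  also have "\<dots> \<le> (\<Sum>x\<in>paths (k+m). F (k+m) x)"
    by (rule sum_mono2) (auto intro: finite_paths cc_paths F0)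
  finally show ?thesis by (simp add: Pd_def F_def)
qed

lemma Pd_lower:
  assumes x: "0 \<le> x" "x \<le> 1" and n: "1 \<le> n" and d: "1 / real n < d"
  shows "c0 ^ n \<le> Pd {x - d<..<x + d} n"
proof -
  define j where "j = nat \<lfloor>x * real n\<rfloor>"
  have "x * real n \<le> real n" using x n by (simp add: mult_left_le_one_le)
  then have jn: "j \<le> n" unfolding j_def by (simp add: nat_le_iff floor_le_iff)
  have fl: "real j \<le> x * real n" "x * real n < real j + 1" unfolding j_def using x n
    by (simp_all add: of_nat_nat)
  define y where "y = (\<lambda>i::nat. if 1 \<le> i \<and> i \<le> j then 1::nat else 0)"
  have y: "y \<in> paths n" using jn by (auto simp: y_def paths_def)
  have "hs n y = card {1..j}" unfolding hs_def y_def
    using jn by (subst sum.mono_neutral_cong_right[of "{1..n}" "{1..j}" _ "\<lambda>_. 1"]) auto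
  then have hy: "hs n y = j" by simp
  have np: "0 < real n" using n by simp
  have "real j / real n \<le> x" using fl np by (simp add: divide_le_eq mult.commute)
  moreover have "x - 1 / real n < real j / real n"
  proof -
    have "x < (real j + 1) / real n" using fl(2) np by (simp add: pos_less_divide_eq)
    then show ?thesis by (simp add: add_divide_distrib)
  qed
  ultimately have "real (hs n y) / real n \<in> {x - d<..<x + d}" using hy d np
    by auto
  note yin = this
  let ?f = "\<lambda>w. if real (hs n w) / real n \<in> {x - d<..<x + d} then pp a n w else 0"
  have "?f y \<le> sum ?f (paths n)"
    by (rule member_le_sum[OF y]) (auto simp: finite_paths pp_nonneg[OF paths_01])
  then have "pp a n y \<le> Pd {x - d<..<x + d} n" using yin by (simp add: Pd_def)
  then show ?thesis using pp_ge[OF paths_01[OF y], of n] by simp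
qed

end


lemma super_iter:
  fixes s :: "nat \<Rightarrow> real"
  assumes sup: "\<And>k m. k \<ge> N0 \<Longrightarrow> m \<ge> N0 \<Longrightarrow> s k + s m \<le> s (k+m)"
    and m: "m \<ge> N0" and r: "r \<ge> N0"
  shows "real q * s m + s r \<le> s (q * m + r)"
proof (induction q)
  case 0 then show ?case by simp
next
  case (Suc q)
  have "s m + s (q * m + r) \<le> s (m + (q * m + r))" by (rule sup) (use m r in auto)
  then show ?case using Suc by (simp add: algebra_simps)
qed

lemma fekete_var:
  fixes b :: "nat \<Rightarrow> real"
  assumes N0: "1 \<le> N0" and C: "0 < C" "C \<le> 1" and c: "0 < c" "c \<le> 1"
    and pos: "\<And>n. n \<ge> N0 \<Longrightarrow> c ^ n \<le> b n" and le1: "\<And>n. b n \<le> 1"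
    and sup: "\<And>k m. k \<ge> N0 \<Longrightarrow> m \<ge> N0 \<Longrightarrow> C * b k * b m \<le> b (k+m)"
  shows "convergent (\<lambda>n. ln (b n) / real n)"
proof -
  define s where "s n = ln (b n) + ln C" for n
  have bpos: "0 < b n" if "n \<ge> N0" for n using pos[OF that] c by (smt (verit) zero_less_power)
  have ssup: "s k + s m \<le> s (k+m)" if "k \<ge> N0" "m \<ge> N0" for k m
  proof -
    have "ln (C * b k * b m) \<le> ln (b (k+m))"
      using sup[OF that] bpos that C by (subst ln_le_cancel_iff) auto
    moreover have "ln (C * b k * b m) = ln C + ln (b k) + ln (b m)"
      using bpos[OF that(1)] bpos[OF that(2)] C by (simp add: ln_mult)
    ultimately show ?thesis by (simp add: s_def)
  qed
  have sle: "s n \<le> 0" if "n \<ge> N0" for n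
    using bpos[OF that] le1[of n] C by (simp add: s_def) (smt (verit) ln_le_zero_iff)
  have sge: "real n * ln c + ln C \<le> s n" if "n \<ge> N0" for n
  proof -
    have "ln (c ^ n) \<le> ln (b n)" using pos[OF that] c bpos[OF that] by simp
    then show ?thesis using c by (simp add: s_def ln_realpow)
  qed
  define S where "S = (SUP n\<in>{N0..}. s n / real n)"
  have bdd: "bdd_above ((\<lambda>n. s n / real n) ` {N0..})"
    by (rule bdd_aboveI[where M=0]) (use sle N0 in \<open>auto simp: divide_nonpos_pos\<close>)
  have upper: "s n / real n \<le> S" if "n \<ge> N0" for n
    unfolding S_def by (rule cSUP_upper[OF _ bdd]) (use that in auto)
  have lim: "(\<lambda>n. s n / real n) \<longlonglongrightarrow> S"
  proof (rule LIMSEQ_I)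
    fix r :: real assume r: "0 < r"
    have "S - r / 2 < S" using r by simp
    then obtain m where m: "m \<ge> N0" and sm: "S - r / 2 < s m / real m"
      unfolding S_def using less_cSUP_iff[OF _ bdd] by force
    define D where "D = - (2 * real m * ln c + ln C)"
    have D0: "0 \<le> D" using c C by (simp add: D_def) (smt (verit) ln_le_zero_iff mult_nonneg_nonpos of_nat_0_le_iff)
    obtain N1 :: nat where N1: "2 * D / r < real N1" using reals_Archimedean2 by blast
    show "\<exists>no. \<forall>n\<ge>no. norm (s n / real n - S) < r"
    proof (intro exI allI impI)
      fix n assume n: "n \<ge> max (max m N1) N0 + 1"
      have mpos: "0 < m" using m N0 by simp
      have nm: "n \<ge> m" "n \<ge> N0" using n by auto
      have npos: "0 < real n" using n by simp
      define q where "q = n div m - 1"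
      define rr where "rr = m + n mod m"
      have dm: "n div m \<ge> 1" using nm mpos div_le_mono[of m n m] by simp
      have nq: "n = q * m + rr" unfolding q_def rr_def using dm
        by (metis add.commute add.left_commute div_mult_mod_eq le_add_diff_inverse2 mult_Suc plus_1_eq_Suc)
      have rr: "rr \<ge> N0" "rr < 2 * m" using m mpos by (auto simp: rr_def)
      have "real q * s m + s rr \<le> s n" using super_iter[OF ssup m rr(1), of q] nq by simp
      moreover have "s rr \<ge> - D"
      proof -
        have "real rr * ln c \<ge> 2 * real m * ln c"
          using rr(2) c by (intro mult_right_mono_neg) auto
        then show ?thesis using sge[OF rr(1)] by (simp add: D_def)
      qed
      moreover have "real n * s m \<le> real q * real m * s m"
      proof -
        have "real q * real m \<le> real n" using nq by (simp flip: of_nat_mult) 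
        then show ?thesis using sle[OF m] by (intro mult_right_mono_neg) auto
      qed
      ultimately have A: "real n * s m \<le> real m * (s n + D)"
      proof -
        assume h: "real q * s m + s rr \<le> s n" "s rr \<ge> - D" "real n * s m \<le> real q * real m * s m"
        have "real q * s m \<le> s n + D" using h by linarith
        then have "real m * (real q * s m) \<le> real m * (s n + D)" by (rule mult_left_mono) simp
        then show ?thesis using h(3) by (simp add: algebra_simps)
      qed
      then have "real n * (s m / real m) - D \<le> s n"
        using mpos by (simp add: field_simps)
      then have "(real n * (s m / real m) - D) / real n \<le> s n / real n"
        by (rule divide_right_mono) (use npos in auto)
      then have "s m / real m - D / real n \<le> s n / real n"
        using npos by (simp add: diff_divide_distrib)
      moreover have "D / real n < r / 2"
      proof -
        have "2 * D / r < real n" using N1 n by linarith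
        then show ?thesis using r npos by (simp add: field_simps)
      qed
      ultimately have "S - r < s n / real n" using sm by linarith
      then show "norm (s n / real n - S) < r" using upper[OF nm(2)] r by simp
    qed
  qed
  have "(\<lambda>n. s n / real n - ln C / real n) \<longlonglongrightarrow> S - 0"
    by (intro tendsto_diff lim lim_const_over_n)
  moreover have "(\<lambda>n. s n / real n - ln C / real n) = (\<lambda>n. ln (b n) / real n)"
    by (simp add: s_def diff_divide_distrib add_divide_distrib)
  ultimately show ?thesis unfolding convergent_def by auto
qed



locale dthp = dpar a + prob_space M for a and M :: "'a measure" +
  fixes \<xi> :: "nat \<Rightarrow> 'a \<Rightarrow> nat"
  assumes meas: "\<And>i. \<xi> i \<in> measurable M (count_space UNIV)"
    and bin: "\<And>i \<omega>. \<omega> \<in> space M \<Longrightarrow> \<xi> i \<omega> \<in> {0, 1}"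
    and cond1: "\<And>n x. n \<ge> 1 \<Longrightarrow> (\<forall>i. x i \<in> {0::nat, 1}) \<Longrightarrow>
        measure M {\<omega> \<in> space M. \<xi> n \<omega> = 1 \<and> (\<forall>i\<in>{1..n-1}. \<xi> i \<omega> = x i)}
        = (a 0 + (\<Sum>i=1..n-1. a (n - i) * real (x i)))
          * measure M {\<omega> \<in> space M. \<forall>i\<in>{1..n-1}. \<xi> i \<omega> = x i}"
    and cond0: "\<And>n x. n \<ge> 1 \<Longrightarrow> (\<forall>i. x i \<in> {0::nat, 1}) \<Longrightarrow>
        measure M {\<omega> \<in> space M. \<xi> n \<omega> = 0 \<and> (\<forall>i\<in>{1..n-1}. \<xi> i \<omega> = x i)}
        = (1 - (a 0 + (\<Sum>i=1..n-1. a (n - i) * real (x i))))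
          * measure M {\<omega> \<in> space M. \<forall>i\<in>{1..n-1}. \<xi> i \<omega> = x i}"
begin

definition "pth n \<omega> = (\<lambda>i. if i \<in> {1..n} then \<xi> i \<omega> else 0)"
definition "EE n x = {\<omega> \<in> space M. \<forall>i\<in>{1..n}. \<xi> i \<omega> = x i}"

lemma EE_sets: "EE n x \<in> sets M"
  unfolding EE_def
proof (rule sets.sets_Collect_finite_All)
  fix i
  have "{\<omega> \<in> space M. \<xi> i \<omega> = x i} = \<xi> i -` {x i} \<inter> space M" by auto
  also have "\<dots> \<in> sets M" by (rule measurable_sets[OF meas]) simp
  finally show "{\<omega> \<in> space M. \<xi> i \<omega> = x i} \<in> sets M" .
qed simp

lemma measure_EE: "(\<forall>i. x i \<in> {0,1}) \<Longrightarrow> measure M (EE n x) = pp a n x"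
proof (induction n)
  case 0
  have "EE 0 x = space M" by (simp add: EE_def)
  then show ?case by (simp add: pp_def prob_space)
next
  case (Suc n)
  have pp: "pp a (Suc n) x = qf a (Suc n) x * pp a n x"
    unfolding pp_def by (simp add: prod.nat_ivl_Suc')
  have e: "EE (Suc n) x = {\<omega> \<in> space M. \<xi> (Suc n) \<omega> = x (Suc n) \<and> (\<forall>i\<in>{1..Suc n - 1}. \<xi> i \<omega> = x i)}"
    unfolding EE_def by (auto simp: le_Suc_eq)
  have e2: "{\<omega> \<in> space M. \<forall>i\<in>{1..Suc n - 1}. \<xi> i \<omega> = x i} = EE n x" by (simp add: EE_def)
  have rt: "a 0 + (\<Sum>i=1..Suc n - 1. a (Suc n - i) * real (x i)) = rt a (Suc n) x" by (simp add: rt_def)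
  show ?case
  proof (cases "x (Suc n) = 1")
    case True
    then show ?thesis using cond1[of "Suc n" x] Suc e e2 rt pp by (simp add: qf_def)
  next
    case False
    then have "x (Suc n) = 0" using Suc.prems by auto
    then show ?thesis using cond0[of "Suc n" x] Suc e e2 rt pp False by (simp add: qf_def)
  qed
qed

lemma pth_paths: "\<omega> \<in> space M \<Longrightarrow> pth n \<omega> \<in> paths n"
  using bin unfolding paths_def pth_def by auto

lemma pth_EE: "\<omega> \<in> space M \<Longrightarrow> x \<in> paths n \<Longrightarrow> (pth n \<omega> = x \<longleftrightarrow> \<omega> \<in> EE n x)"
proof
  assume w: "\<omega> \<in> space M" and e: "pth n \<omega> = x"
  have "\<forall>i\<in>{1..n}. \<xi> i \<omega> = x i"
  proof
    fix i assume "i \<in> {1..n}" then show "\<xi> i \<omega> = x i" using fun_cong[OF e, of i] by (simp add: pth_def)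
  qed
  then show "\<omega> \<in> EE n x" using w by (simp add: EE_def)
next
  assume w: "\<omega> \<in> space M" and x: "x \<in> paths n" and e: "\<omega> \<in> EE n x"
  show "pth n \<omega> = x"
  proof
    fix i show "pth n \<omega> i = x i"
    proof (cases "i \<in> {1..n}")
      case True then show ?thesis using e by (simp add: EE_def pth_def)
    next
      case False
      then have "x i = 0" using x unfolding paths_def by blast
      then show ?thesis using False unfolding pth_def by presburger
    qed
  qed
qed

lemma integral_pth: "integral\<^sup>L M (\<lambda>\<omega>. F (pth n \<omega>)) = (\<Sum>x\<in>paths n. F x * pp a n x)"
proof -
  have "integral\<^sup>L M (\<lambda>\<omega>. F (pth n \<omega>)) = integral\<^sup>L M (\<lambda>\<omega>. \<Sum>x\<in>paths n. F x * indicator (EE n x) \<omega>)"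
  proof (rule Bochner_Integration.integral_cong[OF refl])
    fix \<omega> assume w: "\<omega> \<in> space M"
    have "(\<Sum>x\<in>paths n. F x * indicator (EE n x) \<omega>) = (\<Sum>x\<in>paths n. if pth n \<omega> = x then F x else 0)"
      by (rule sum.cong) (use pth_EE[OF w] in auto)
    also have "\<dots> = F (pth n \<omega>)" using pth_paths[OF w] finite_paths by (simp add: sum.delta)
    finally show "F (pth n \<omega>) = (\<Sum>x\<in>paths n. F x * indicator (EE n x) \<omega>)" by simp
  qed
  also have "\<dots> = (\<Sum>x\<in>paths n. integral\<^sup>L M (\<lambda>\<omega>. F x * indicator (EE n x) \<omega>))"
    by (rule Bochner_Integration.integral_sum) (auto intro!: integrable_mult_right integrable_real_indicator EE_sets simp: less_top[symmetric])
  also have "\<dots> = (\<Sum>x\<in>paths n. F x * pp a n x)"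
  proof (rule sum.cong[OF refl])
    fix x assume x: "x \<in> paths n"
    have "EE n x \<inter> space M = EE n x" by (auto simp: EE_def)
    then show "integral\<^sup>L M (\<lambda>\<omega>. F x * indicator (EE n x) \<omega>) = F x * pp a n x"
      using measure_EE[OF paths_01[OF x], of n] by simp
  qed
  finally show ?thesis .
qed

lemma measure_pth: "measure M {\<omega> \<in> space M. Q (pth n \<omega>)} = (\<Sum>x\<in>paths n. if Q x then pp a n x else 0)"
proof -
  have "measure M {\<omega> \<in> space M. Q (pth n \<omega>)} = integral\<^sup>L M (indicator {\<omega> \<in> space M. Q (pth n \<omega>)})"
    by (simp add: Int_absorb2)
  also have "\<dots> = integral\<^sup>L M (\<lambda>\<omega>. (\<lambda>x. if Q x then 1 else 0) (pth n \<omega>))"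
    by (rule Bochner_Integration.integral_cong) (auto simp: indicator_def)
  also have "\<dots> = (\<Sum>x\<in>paths n. if Q x then pp a n x else 0)"
    by (subst integral_pth) (rule sum.cong; simp)
  finally show ?thesis .
qed

lemma sum_pp: "(\<Sum>x\<in>paths n. pp a n x) = 1"
  using measure_pth[of "\<lambda>_. True" n] by (simp add: prob_space)

lemma hs_pth: "hs n (pth n \<omega>) = (\<Sum>i=1..n. \<xi> i \<omega>)"
  unfolding hs_def pth_def by simp

lemma Pd_le1: "Pd A n \<le> 1"
proof -
  have "Pd A n \<le> (\<Sum>x\<in>paths n. pp a n x)" unfolding Pd_def
    by (rule sum_mono) (simp add: pp_nonneg[OF paths_01])
  then show ?thesis using sum_pp by simp
qed

lemma Pd_conv:
  assumes x: "0 \<le> x" "x \<le> 1" and d: "0 < d"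
  shows "convergent (\<lambda>n. ln (Pd {x - d<..<x + d} n) / real n)"
proof -
  obtain N0 :: nat where N0: "1 / d < real N0" using reals_Archimedean2 by blast
  have N01: "1 \<le> N0" using N0 d by (cases N0) (auto simp: field_simps)
  have small: "1 / real n < d" if "n \<ge> N0" for n
  proof -
    have "1 / d < real n" using N0 that by linarith
    moreover have "0 < real n" using that N01 by simp
    ultimately show ?thesis using d by (simp add: pos_divide_less_eq field_simps)
  qed
  show ?thesis
  proof (rule fekete_var[OF N01, of "exp (- kap)" c0])
    show "0 < exp (- kap)" by simp
    show "exp (- kap) \<le> 1" using TT_nonneg sa_lt1 by (simp add: kap_def)
    show "0 < c0" by (rule c0_pos)
    show "c0 \<le> 1" by (rule c0_le1)
    show "c0 ^ n \<le> Pd {x - d<..<x + d} n" if "N0 \<le> n" for n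
      by (rule Pd_lower[OF x]) (use that N01 small in auto)
    show "Pd {x - d<..<x + d} n \<le> 1" for n by (rule Pd_le1)
    show "exp (- kap) * Pd {x - d<..<x + d} k * Pd {x - d<..<x + d} m \<le> Pd {x - d<..<x + d} (k + m)"
      if "N0 \<le> k" "N0 \<le> m" for k m
      by (rule Pd_super) (use that N01 in auto)
  qed
qed

end


lemma cover_pt:
  fixes y d :: real
  assumes y: "0 \<le> y" "y \<le> 1" and N: "1 \<le> N" and d: "1 / real N < d"
  shows "\<exists>i\<in>{0..N}. \<bar>y - real i / real N\<bar> < d"
proof -
  define j where "j = nat \<lfloor>y * real N\<rfloor>"
  have "y * real N \<le> real N" using y N by (simp add: mult_left_le_one_le)
  then have jn: "j \<le> N" unfolding j_def by (simp add: nat_le_iff floor_le_iff)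
  have fl: "real j \<le> y * real N" "y * real N < real j + 1" unfolding j_def using y N
    by (simp_all add: of_nat_nat)
  have np: "0 < real N" using N by simp
  have "real j / real N \<le> y" using fl np by (simp add: divide_le_eq mult.commute)
  moreover have "y - 1 / real N < real j / real N"
  proof -
    have "y < (real j + 1) / real N" using fl(2) np by (simp add: pos_less_divide_eq)
    then show ?thesis by (simp add: add_divide_distrib)
  qed
  ultimately have "\<bar>y - real j / real N\<bar> < d" using d by auto
  then show ?thesis using jn by auto
qed

context dpar begin

lemma hs_unit: "x \<in> paths n \<Longrightarrow> 1 \<le> n \<Longrightarrow> 0 \<le> real (hs n x) / real n \<and> real (hs n x) / real n \<le> 1"
  using hs_le[of x n] by (auto simp: divide_le_eq)

lemma Zd_ge:
  assumes n: "1 \<le> n" and g: "\<And>y. 0 \<le> y \<Longrightarrow> y \<le> 1 \<Longrightarrow> y \<in> A \<Longrightarrow> c \<le> g y"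
  shows "exp (real n * c) * Pd A n \<le> Zd g n"
proof -
  have "exp (real n * c) * Pd A n = (\<Sum>x\<in>paths n. if real (hs n x) / real n \<in> A then exp (real n * c) * pp a n x else 0)"
    unfolding Pd_def sum_distrib_left by (rule sum.cong) auto
  also have "\<dots> \<le> Zd g n" unfolding Zd_def
  proof (rule sum_mono)
    fix x assume x: "x \<in> paths n"
    have pp0: "0 \<le> pp a n x" by (rule pp_nonneg[OF paths_01[OF x]])
    show "(if real (hs n x) / real n \<in> A then exp (real n * c) * pp a n x else 0) \<le> exp (real n * g (real (hs n x) / real n)) * pp a n x"
    proof (cases "real (hs n x) / real n \<in> A")
      case True
      then have "c \<le> g (real (hs n x) / real n)" using g hs_unit[OF x n] by auto
      then have "exp (real n * c) \<le> exp (real n * g (real (hs n x) / real n))"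
        by (simp add: mult_left_mono)
      then show ?thesis using True pp0 by (simp add: mult_right_mono)
    qed (simp add: pp0)
  qed
  finally show ?thesis .
qed

lemma Zd_le:
  assumes n: "1 \<le> n" and I: "finite I"
    and cov: "\<And>y. 0 \<le> y \<Longrightarrow> y \<le> 1 \<Longrightarrow> \<exists>i\<in>I. y \<in> B i \<and> g y \<le> c i"
  shows "Zd g n \<le> (\<Sum>i\<in>I. exp (real n * c i) * Pd (B i) n)"
proof -
  have "Zd g n \<le> (\<Sum>x\<in>paths n. \<Sum>i\<in>I. if real (hs n x) / real n \<in> B i then exp (real n * c i) * pp a n x else 0)"
    unfolding Zd_def
  proof (rule sum_mono)
    fix x assume x: "x \<in> paths n"
    have pp0: "0 \<le> pp a n x" by (rule pp_nonneg[OF paths_01[OF x]])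
    obtain i where i: "i \<in> I" "real (hs n x) / real n \<in> B i" "g (real (hs n x) / real n) \<le> c i"
      using cov hs_unit[OF x n] by blast
    have "exp (real n * g (real (hs n x) / real n)) * pp a n x \<le> exp (real n * c i) * pp a n x"
      using i(3) pp0 by (intro mult_right_mono) (auto simp: mult_left_mono)
    also have "\<dots> = (if real (hs n x) / real n \<in> B i then exp (real n * c i) * pp a n x else 0)" using i by simp
    also have "\<dots> \<le> (\<Sum>i\<in>I. if real (hs n x) / real n \<in> B i then exp (real n * c i) * pp a n x else 0)"
      by (rule member_le_sum[OF i(1)]) (use I pp0 in auto)
    finally show "exp (real n * g (real (hs n x) / real n)) * pp a n x \<le> (\<Sum>i\<in>I. if real (hs n x) / real n \<in> B i then exp (real n * c i) * pp a n x else 0)" .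
  qed
  also have "\<dots> = (\<Sum>i\<in>I. exp (real n * c i) * Pd (B i) n)"
    by (subst sum.swap) (simp add: Pd_def sum_distrib_left if_distrib cong: if_cong)
  finally show ?thesis .
qed

lemma Pd_subadd:
  assumes n: "1 \<le> n" and I: "finite I"
    and cov: "\<And>y. 0 \<le> y \<Longrightarrow> y \<le> 1 \<Longrightarrow> y \<in> S \<Longrightarrow> \<exists>i\<in>I. y \<in> B i"
  shows "Pd S n \<le> (\<Sum>i\<in>I. Pd (B i) n)"
proof -
  have "Pd S n \<le> (\<Sum>x\<in>paths n. \<Sum>i\<in>I. if real (hs n x) / real n \<in> B i then pp a n x else 0)"
    unfolding Pd_def
  proof (rule sum_mono)
    fix x assume x: "x \<in> paths n"
    have pp0: "0 \<le> pp a n x" by (rule pp_nonneg[OF paths_01[OF x]])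
    show "(if real (hs n x) / real n \<in> S then pp a n x else 0) \<le> (\<Sum>i\<in>I. if real (hs n x) / real n \<in> B i then pp a n x else 0)"
    proof (cases "real (hs n x) / real n \<in> S")
      case True
      then obtain i where i: "i \<in> I" "real (hs n x) / real n \<in> B i"
        using cov hs_unit[OF x n] by blast
      have "pp a n x = (if real (hs n x) / real n \<in> B i then pp a n x else 0)" using i by simp
      also have "\<dots> \<le> (\<Sum>i\<in>I. if real (hs n x) / real n \<in> B i then pp a n x else 0)"
        by (rule member_le_sum[OF i(1)]) (use I pp0 in auto)
      finally show ?thesis using True by simp
    qed (auto intro: sum_nonneg simp: pp0)
  qed
  also have "\<dots> = (\<Sum>i\<in>I. Pd (B i) n)"
    by (subst sum.swap) (simp add: Pd_def)
  finally show ?thesis .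
qed

end


context dthp begin

lemma Zd_pos: "0 < Zd g n"
proof -
  have y: "(\<lambda>_. 0) \<in> paths n" by (simp add: paths_def)
  have "exp (real n * g (real (hs n (\<lambda>_. 0)) / real n)) * pp a n (\<lambda>_. 0) \<le> Zd g n"
    unfolding Zd_def by (rule member_le_sum[OF y]) (auto intro!: mult_nonneg_nonneg pp_nonneg[OF paths_01] finite_paths)
  moreover have "0 < pp a n (\<lambda>_. 0)" using pp_ge[OF paths_01[OF y], of n] c0_pos by (smt (verit) zero_less_power)
  ultimately show ?thesis by (smt (verit) exp_gt_zero mult_pos_pos)
qed

lemma Zd_conv:
  assumes g: "continuous_on {0..1} g"
  shows "convergent (\<lambda>n. ln (Zd g n) / real n)"
proof (rule Cauchy_convergent, rule CauchyI)
  fix e :: real assume e: "0 < e"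
  define ep where "ep = e / 8"
  have ep: "0 < ep" using e by (simp add: ep_def)
  have uc: "uniformly_continuous_on {0..1} g" by (rule compact_uniformly_continuous[OF g]) simp
  obtain dl where dl: "0 < dl" and dlg: "\<And>x y. x \<in> {0..1} \<Longrightarrow> y \<in> {0..1} \<Longrightarrow> dist y x < dl \<Longrightarrow> dist (g y) (g x) < ep"
    using uc ep unfolding uniformly_continuous_on_def by metis
  obtain N :: nat where N: "1 / dl < real N" using reals_Archimedean2 by blast
  have N1: "1 \<le> N" using N dl by (cases N) (auto simp: field_simps)
  have Nd: "1 / real N < dl"
  proof -
    have "0 < real N" using N1 by simp
    then show ?thesis using N dl by (simp add: pos_divide_less_eq field_simps)
  qed
  define xp where "xp i = real i / real N" for i
  have xp01: "0 \<le> xp i \<and> xp i \<le> 1" if "i \<in> {0..N}" for i using that N1 by (auto simp: xp_def divide_le_eq)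
  define A where "A i = {xp i - dl<..<xp i + dl}" for i
  define L where "L i = lim (\<lambda>n. ln (Pd (A i) n) / real n)" for i
  have Llim: "(\<lambda>n. ln (Pd (A i) n) / real n) \<longlonglongrightarrow> L i" if "i \<in> {0..N}" for i
    unfolding L_def A_def using Pd_conv[of "xp i" dl] xp01[OF that] dl by (simp add: convergent_LIMSEQ_iff)
  define V where "V = Max ((\<lambda>i. g (xp i) + L i) ` {0..N})"
  obtain i0 where i0: "i0 \<in> {0..N}" and V: "V = g (xp i0) + L i0"
    unfolding V_def by (metis (no_types, lifting) Max_in atLeastAtMost_iff empty_iff finite_atLeastAtMost finite_imageI imageE image_is_empty le0)
  have Vge: "g (xp i) + L i \<le> V" if "i \<in> {0..N}" for i unfolding V_def by (rule Max_ge) (use that in auto)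
  have ev1: "\<forall>\<^sub>F n in sequentially. \<forall>i\<in>{0..N}. \<bar>ln (Pd (A i) n) / real n - L i\<bar> < ep"
  proof (rule eventually_ball_finite, simp, intro ballI)
    fix i assume "i \<in> {0..N}"
    from Llim[OF this] ep show "\<forall>\<^sub>F n in sequentially. \<bar>ln (Pd (A i) n) / real n - L i\<bar> < ep"
      unfolding tendsto_iff dist_real_def by blast
  qed
  have ev2: "\<forall>\<^sub>F n in sequentially. ln (real N + 1) / real n < ep"
  proof -
    have "(\<lambda>n. ln (real N + 1) / real n) \<longlonglongrightarrow> 0" by (rule lim_const_over_n)
    then show ?thesis using ep by (rule order_tendstoD)
  qed
  have ev3: "\<forall>\<^sub>F n in sequentially. N \<le> n" by (rule eventually_ge_at_top)
  obtain K where K: "\<And>n. n \<ge> K \<Longrightarrow> (\<forall>i\<in>{0..N}. \<bar>ln (Pd (A i) n) / real n - L i\<bar> < ep) \<and> ln (real N + 1) / real n < ep \<and> N \<le> n"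
    using eventually_conj[OF ev1 eventually_conj[OF ev2 ev3]] unfolding eventually_sequentially by blast
  have close: "\<bar>ln (Zd g n) / real n - V\<bar> \<le> 3 * ep" if n: "n \<ge> K" for n
  proof -
    note Kn = K[OF n]
    have n1: "1 \<le> n" using Kn N1 by simp
    have np: "0 < real n" using n1 by simp
    have Ppos: "0 < Pd (A i) n" if "i \<in> {0..N}" for i
    proof -
      have "c0 ^ n \<le> Pd (A i) n" unfolding A_def
      proof (rule Pd_lower)
        show "0 \<le> xp i" "xp i \<le> 1" using xp01[OF that] by auto
        show "1 \<le> n" by (rule n1)
        have "1 / real n \<le> 1 / real N" using Kn N1 by (simp add: frac_le)
        then show "1 / real n < dl" using Nd by linarith
      qed
      then show ?thesis using c0_pos by (smt (verit) zero_less_power)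
    qed
    have Zpos: "0 < Zd g n" by (rule Zd_pos)
    have "exp (real n * (g (xp i0) - ep)) * Pd (A i0) n \<le> Zd g n"
    proof (rule Zd_ge[OF n1])
      fix y :: real assume y: "0 \<le> y" "y \<le> 1" "y \<in> A i0"
      have "dist (g y) (g (xp i0)) < ep"
        by (rule dlg) (use y xp01[OF i0] in \<open>auto simp: A_def dist_real_def\<close>)
      then show "g (xp i0) - ep \<le> g y" by (simp add: dist_real_def)
    qed
    then have "ln (exp (real n * (g (xp i0) - ep)) * Pd (A i0) n) \<le> ln (Zd g n)"
      using Ppos[OF i0] Zpos by (subst ln_le_cancel_iff) auto
    then have "real n * (g (xp i0) - ep) + ln (Pd (A i0) n) \<le> ln (Zd g n)"
      using Ppos[OF i0] by (simp add: ln_mult)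
    then have "(real n * (g (xp i0) - ep) + ln (Pd (A i0) n)) / real n \<le> ln (Zd g n) / real n"
      by (rule divide_right_mono) simp
    then have low: "g (xp i0) - ep + ln (Pd (A i0) n) / real n \<le> ln (Zd g n) / real n"
      using np by (simp add: add_divide_distrib)
    have "\<bar>ln (Pd (A i0) n) / real n - L i0\<bar> < ep" using Kn i0 by blast
    then have "L i0 - ep < ln (Pd (A i0) n) / real n" by linarith
    then have lowf: "V - 2 * ep \<le> ln (Zd g n) / real n" using low V by linarith
    have "Zd g n \<le> (\<Sum>i\<in>{0..N}. exp (real n * (g (xp i) + ep)) * Pd (A i) n)"
    proof (rule Zd_le[OF n1])
      fix y :: real assume y: "0 \<le> y" "y \<le> 1"
      obtain i where i: "i \<in> {0..N}" "\<bar>y - real i / real N\<bar> < dl" using cover_pt[OF y N1 Nd] by blast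
      have "dist (g y) (g (xp i)) < ep"
        by (rule dlg) (use y xp01[OF i(1)] i(2) in \<open>auto simp: xp_def dist_real_def\<close>)
      then show "\<exists>i\<in>{0..N}. y \<in> A i \<and> g y \<le> g (xp i) + ep"
        using i by (intro bexI[of _ i]) (auto simp: A_def xp_def dist_real_def)
    qed simp
    also have "\<dots> \<le> (\<Sum>i\<in>{0..N}. exp (real n * (V + 2 * ep)))"
    proof (rule sum_mono)
      fix i assume i: "i \<in> {0..N}"
      have "\<bar>ln (Pd (A i) n) / real n - L i\<bar> < ep" using Kn i by blast
      then have "ln (Pd (A i) n) / real n < L i + ep" by linarith
      then have "ln (Pd (A i) n) < real n * (L i + ep)" using np by (simp add: pos_divide_less_eq mult.commute)
      then have "real n * (g (xp i) + ep) + ln (Pd (A i) n) \<le> real n * (V + 2 * ep)"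
        using Vge[OF i] np by (smt (verit) distrib_left mult_left_mono)
      then have "exp (real n * (g (xp i) + ep) + ln (Pd (A i) n)) \<le> exp (real n * (V + 2 * ep))" by simp
      then show "exp (real n * (g (xp i) + ep)) * Pd (A i) n \<le> exp (real n * (V + 2 * ep))"
        using Ppos[OF i] by (simp add: exp_add)
    qed
    also have "\<dots> = (real N + 1) * exp (real n * (V + 2 * ep))" by simp
    finally have "ln (Zd g n) \<le> ln ((real N + 1) * exp (real n * (V + 2 * ep)))"
      using Zpos by (subst ln_le_cancel_iff) auto
    then have "ln (Zd g n) \<le> ln (real N + 1) + real n * (V + 2 * ep)"
      by (simp add: ln_mult)
    then have "ln (Zd g n) / real n \<le> (ln (real N + 1) + real n * (V + 2 * ep)) / real n"
      by (rule divide_right_mono) simp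
    then have "ln (Zd g n) / real n \<le> ln (real N + 1) / real n + (V + 2 * ep)"
      using np by (simp add: add_divide_distrib)
    then have upf: "ln (Zd g n) / real n \<le> V + 3 * ep" using Kn by linarith
    show ?thesis using lowf upf ep by linarith
  qed
  show "\<exists>M. \<forall>m\<ge>M. \<forall>n\<ge>M. norm (ln (Zd g m) / real m - ln (Zd g n) / real n) < e"
  proof (intro exI allI impI)
    fix m n assume "K \<le> m" "K \<le> n"
    then have "\<bar>ln (Zd g m) / real m - V\<bar> \<le> 3 * ep" "\<bar>ln (Zd g n) / real n - V\<bar> \<le> 3 * ep"
      using close by auto
    moreover have "6 * ep < e" using e by (simp add: ep_def)
    ultimately show "norm (ln (Zd g m) / real m - ln (Zd g n) / real n) < e"
      unfolding real_norm_def by linarith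
  qed
qed

end


lemma elog_term: "1 \<le> n \<Longrightarrow> ereal (1 / real n) * elog p = (if p \<le> 0 then -\<infinity> else ereal (ln p / real n))"
  by (simp add: elog_def)

context dthp begin

definition "Gam g = lim (\<lambda>n. ln (Zd g n) / real n)"
definition "Rt x = (SUP g\<in>{g. continuous_on {0..1} g}. ereal (g x - Gam g))"

lemma Gam_lim: "continuous_on {0..1} g \<Longrightarrow> (\<lambda>n. ln (Zd g n) / real n) \<longlonglongrightarrow> Gam g"
  unfolding Gam_def using Zd_conv convergent_LIMSEQ_iff by blast

lemma Gam0: "Gam (\<lambda>_. 0) = 0"
proof -
  have "Zd (\<lambda>_. 0) n = 1" for n using sum_pp[of n] by (simp add: Zd_def)
  then show ?thesis by (simp add: Gam_def)
qed

lemma Rt_ge: "continuous_on {0..1} g \<Longrightarrow> ereal (g x - Gam g) \<le> Rt x"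
  unfolding Rt_def by (rule SUP_upper) simp

lemma Rt_nonneg: "0 \<le> Rt x"
  using Rt_ge[of "\<lambda>_. 0" x] by (simp add: Gam0 zero_ereal_def)

lemma Rt_good: "good_rate_function Rt"
proof -
  let ?C = "{g. continuous_on {0..1} g}"
  have eq: "{x \<in> {0..1}. Rt x \<le> ereal c} = {0..1} \<inter> (\<Inter>g\<in>?C. {0..1} \<inter> g -` {..c + Gam g})" for c
    by (auto simp: Rt_def SUP_le_iff)
  have cl: "closed ({0..1::real} \<inter> (\<Inter>g\<in>?C. {0..1} \<inter> g -` {..c + Gam g}))" for c
    by (intro closed_Int closed_INT ballI continuous_closed_preimage) auto
  have "closedin (top_of_set {0..1}) {x \<in> {0..1}. Rt x \<le> ereal c}" for c
    unfolding closedin_closed eq using cl[of c] by (intro exI[of _ "{0..1} \<inter> (\<Inter>g\<in>?C. {0..1} \<inter> g -` {..c + Gam g})"]) auto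
  moreover have "compact {x \<in> {0..1}. Rt x \<le> ereal c}" for c
    unfolding compact_eq_bounded_closed eq using cl[of c]
    by (auto intro: bounded_subset[OF bounded_closed_interval])
  ultimately show ?thesis unfolding good_rate_function_def rate_function_def
    using Rt_nonneg by auto
qed


lemma ball_bound:
  assumes x: "x \<in> {0..1}" and mu: "ereal mu < Rt x"
  shows "\<exists>rho>0. \<forall>\<^sub>F n in sequentially. Pd (ball x rho) n \<le> exp (- (real n * mu))"
proof -
  obtain g where g: "continuous_on {0..1} g" and gx: "ereal mu < ereal (g x - Gam g)"
    using mu unfolding Rt_def less_SUP_iff by blast
  define eta where "eta = g x - Gam g - mu"
  have eta: "0 < eta" using gx by (simp add: eta_def)
  obtain rho where rho: "0 < rho" and rg: "\<And>x'. x' \<in> {0..1} \<Longrightarrow> dist x' x < rho \<Longrightarrow> dist (g x') (g x) < eta / 2"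
    using g[unfolded continuous_on_iff] x eta by (metis half_gt_zero)
  have ev: "\<forall>\<^sub>F n in sequentially. ln (Zd g n) / real n < Gam g + eta / 4"
    using Gam_lim[OF g] eta by (intro order_tendstoD) auto
  have "\<forall>\<^sub>F n in sequentially. Pd (ball x rho) n \<le> exp (- (real n * mu))"
    using eventually_conj[OF ev eventually_ge_at_top[of 1]]
  proof (rule eventually_mono, clarify)
    fix n :: nat assume l: "ln (Zd g n) / real n < Gam g + eta / 4" and n: "1 \<le> n"
    have np: "0 < real n" using n by simp
    have A: "exp (real n * (g x - eta / 2)) * Pd (ball x rho) n \<le> Zd g n"
    proof (rule Zd_ge[OF n])
      fix y' :: real assume y': "0 \<le> y'" "y' \<le> 1" "y' \<in> ball x rho"
      then have "dist y' x < rho" by (simp add: dist_commute)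
      then have "dist (g y') (g x) < eta / 2" using rg[of y'] y' by auto
      then show "g x - eta / 2 \<le> g y'" unfolding dist_real_def by linarith
    qed
    have "ln (Zd g n) < real n * (Gam g + eta / 4)" using l np by (simp add: pos_divide_less_eq mult.commute)
    then have "exp (ln (Zd g n)) \<le> exp (real n * (Gam g + eta / 4))" by simp
    then have B: "Zd g n \<le> exp (real n * (Gam g + eta / 4))" using Zd_pos by simp
    have "Pd (ball x rho) n = exp (- (real n * (g x - eta / 2))) * (exp (real n * (g x - eta / 2)) * Pd (ball x rho) n)"
      by (simp add: mult.assoc[symmetric] exp_add[symmetric])
    also have "\<dots> \<le> exp (- (real n * (g x - eta / 2))) * exp (real n * (Gam g + eta / 4))"
      using A B by (intro mult_left_mono) auto
    also have "\<dots> = exp (- (real n * (g x - eta / 2)) + real n * (Gam g + eta / 4))"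
      by (simp add: exp_add[symmetric])
    also have "exp (- (real n * (g x - eta / 2)) + real n * (Gam g + eta / 4)) = exp (real n * (- mu - eta / 4))"
      unfolding eta_def by (rule arg_cong[where f=exp]) (simp add: field_simps)
    also have "\<dots> \<le> exp (- (real n * mu))"
      using eta np by (simp add: algebra_simps)
    finally show "Pd (ball x rho) n \<le> exp (- (real n * mu))" .
  qed
  then show ?thesis using rho by blast
qed

lemma ldp_upper:
  assumes F: "closedin (top_of_set {0..1}) F"
  shows "limsup (\<lambda>n. ereal (1 / real n) * elog (Pd F n)) \<le> - (INF x\<in>F. Rt x)"
proof -
  have Fsub: "F \<subseteq> {0..1}" using closedin_imp_subset[OF F] by simp
  have Fcl: "closed F" by (rule closedin_closed_trans[OF F]) simp
  have Fc: "compact F" unfolding compact_eq_bounded_closed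
    using Fcl Fsub by (auto intro: bounded_subset[OF bounded_closed_interval])
  show ?thesis unfolding Limsup_le_iff
  proof (intro allI impI)
    fix y assume y: "- (INF x\<in>F. Rt x) < y"
    then have "- y < (INF x\<in>F. Rt x)" using ereal_uminus_less_reorder by blast
    then obtain mu where mu1: "- y < ereal mu" and mu2: "ereal mu < (INF x\<in>F. Rt x)"
      using ereal_dense2 by blast
    have "\<forall>x\<in>F. \<exists>rho>0. \<forall>\<^sub>F n in sequentially. Pd (ball x rho) n \<le> exp (- (real n * mu))"
    proof
      fix x assume x: "x \<in> F"
      have "ereal mu < Rt x" using mu2 x by (meson INF_lower less_le_trans)
      then show "\<exists>rho>0. \<forall>\<^sub>F n in sequentially. Pd (ball x rho) n \<le> exp (- (real n * mu))"
        using ball_bound x Fsub by blast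
    qed
    then obtain rr where rr: "\<And>x. x \<in> F \<Longrightarrow> 0 < rr x"
      "\<And>x. x \<in> F \<Longrightarrow> \<forall>\<^sub>F n in sequentially. Pd (ball x (rr x)) n \<le> exp (- (real n * mu))"
      by metis
    obtain X where X: "X \<subseteq> F" "finite X" "F \<subseteq> (\<Union>x\<in>X. ball x (rr x))"
      using compactE_image[OF Fc, of F "\<lambda>x. ball x (rr x)"] rr(1) by force
    have ev1: "\<forall>\<^sub>F n in sequentially. \<forall>x\<in>X. Pd (ball x (rr x)) n \<le> exp (- (real n * mu))"
      using X rr(2) by (intro eventually_ball_finite) auto
    have bound: "Pd F n \<le> (real (card X) + 1) * exp (- (real n * mu))"
      if n: "1 \<le> n" and h: "\<forall>x\<in>X. Pd (ball x (rr x)) n \<le> exp (- (real n * mu))" for n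
    proof -
      have "Pd F n \<le> (\<Sum>x\<in>X. Pd (ball x (rr x)) n)"
        by (rule Pd_subadd[OF n X(2)]) (use X(3) in blast)
      also have "\<dots> \<le> (\<Sum>x\<in>X. exp (- (real n * mu)))" by (rule sum_mono) (use h in auto)
      also have "\<dots> \<le> (real (card X) + 1) * exp (- (real n * mu))" by simp
      finally show ?thesis .
    qed
    show "\<forall>\<^sub>F n in sequentially. ereal (1 / real n) * elog (Pd F n) < y"
    proof (cases y)
      case PInf
      show ?thesis using eventually_ge_at_top[of 1]
        by (rule eventually_mono) (simp add: elog_term PInf)
    next
      case MInf
      then show ?thesis using mu1 by simp
    next
      case (real yr)
      have ymu: "0 < yr + mu" using mu1 real by simp
      have ev2: "\<forall>\<^sub>F n in sequentially. ln (real (card X) + 1) / real n < yr + mu"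
        using lim_const_over_n ymu by (rule order_tendstoD)
      show ?thesis using eventually_conj[OF ev1 eventually_conj[OF ev2 eventually_ge_at_top[of 1]]]
      proof (rule eventually_mono, clarify)
        fix n :: nat assume h: "\<forall>x\<in>X. Pd (ball x (rr x)) n \<le> exp (- (real n * mu))"
          and l: "ln (real (card X) + 1) / real n < yr + mu" and n: "1 \<le> n"
        have np: "0 < real n" using n by simp
        show "ereal (1 / real n) * elog (Pd F n) < y"
        proof (cases "Pd F n \<le> 0")
          case True then show ?thesis by (simp add: elog_term[OF n] real)
        next
          case False
          have "ln (Pd F n) \<le> ln ((real (card X) + 1) * exp (- (real n * mu)))"
            using bound[OF n h] False by (subst ln_le_cancel_iff) auto
          also have "\<dots> = ln (real (card X) + 1) - real n * mu" by (simp add: ln_mult)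
          finally have "ln (Pd F n) / real n \<le> (ln (real (card X) + 1) - real n * mu) / real n"
            by (rule divide_right_mono) simp
          also have "\<dots> = ln (real (card X) + 1) / real n - mu" using np by (simp add: diff_divide_distrib)
          finally have "ln (Pd F n) / real n < yr" using l by linarith
          then show ?thesis using False by (simp add: elog_term[OF n] real)
        qed
      qed
    qed
  qed
qed


lemma Pd_mono_sub:
  assumes n: "1 \<le> n" and h: "\<And>y. 0 \<le> y \<Longrightarrow> y \<le> 1 \<Longrightarrow> y \<in> S \<Longrightarrow> y \<in> T"
  shows "Pd S n \<le> Pd T n"
  using Pd_subadd[OF n, of "{0::nat}" S "\<lambda>_. T"] h by auto

lemma ldp_lower_pt:
  assumes G: "openin (top_of_set {0..1}) G" and x: "x \<in> G"
  shows "- Rt x \<le> liminf (\<lambda>n. ereal (1 / real n) * elog (Pd G n))"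
proof -
  have x01: "0 \<le> x" "x \<le> 1" using openin_imp_subset[OF G] x by auto
  obtain rho where rho: "0 < rho" and rG: "\<And>x'. x' \<in> {0..1} \<Longrightarrow> dist x' x < rho \<Longrightarrow> x' \<in> G"
    using G x unfolding openin_euclidean_subtopology_iff by metis
  show ?thesis unfolding le_Liminf_iff
  proof (intro allI impI)
    fix y assume y: "y < - Rt x"
    obtain yr where y1: "y < ereal yr" and y2: "ereal yr < - Rt x" using ereal_dense2[OF y] by auto
    have "Rt x < - ereal yr" using y2 by (metis ereal_minus_less_minus ereal_uminus_uminus)
    then obtain r where r: "Rt x = ereal r" using Rt_nonneg[of x] by (cases "Rt x") auto
    have yr: "yr < - r" using y2 r by simp
    define m where "m = r + 1"
    have m: "1 \<le> m" using Rt_nonneg[of x] r by (simp add: m_def)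
    define g where "g y' = - m * min (\<bar>y' - x\<bar> / rho) 1" for y'
    have gc: "continuous_on {0..1} g" unfolding g_def using rho by (intro continuous_intros) auto
    have "ereal (g x - Gam g) \<le> ereal r" using Rt_ge[OF gc, of x] r by simp
    then have Gamg: "- r \<le> Gam g" by (simp add: g_def)
    define ep where "ep = min (1/4) ((- r - yr) / 4)"
    have ep: "0 < ep" "ep \<le> 1/4" "2 * ep < - r - yr" using yr unfolding ep_def by (auto simp: min_def)
    obtain N :: nat where N: "1 / rho < real N" using reals_Archimedean2 by blast
    have ev1: "\<forall>\<^sub>F n in sequentially. Gam g - ep < ln (Zd g n) / real n"
      using Gam_lim[OF gc] ep by (intro order_tendstoD) auto
    have ev2: "\<forall>\<^sub>F n in sequentially. ln 2 / real n < ep"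
      using lim_const_over_n ep(1) by (rule order_tendstoD)
    have ev3: "\<forall>\<^sub>F n in sequentially. N + 1 \<le> n" by (rule eventually_ge_at_top)
    show "\<forall>\<^sub>F n in sequentially. y < ereal (1 / real n) * elog (Pd G n)"
      using eventually_conj[OF ev1 eventually_conj[OF ev2 ev3]]
    proof (rule eventually_mono, clarify)
      fix n :: nat assume l1: "Gam g - ep < ln (Zd g n) / real n" and l2: "ln 2 / real n < ep" and n: "N + 1 \<le> n"
      have n1: "1 \<le> n" using n by simp
      have np: "0 < real n" using n1 by simp
      have rn: "1 / real n < rho"
      proof -
        have "1 / rho < real n" using N n by linarith
        then show ?thesis using rho np by (simp add: pos_divide_less_eq field_simps)
      qed
      have "c0 ^ n \<le> Pd {x - rho<..<x + rho} n" by (rule Pd_lower[OF x01 n1 rn])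
      also have "\<dots> \<le> Pd G n"
        by (rule Pd_mono_sub[OF n1]) (auto intro!: rG simp: dist_real_def abs_less_iff)
      finally have Ppos: "0 < Pd G n" using c0_pos by (smt (verit) zero_less_power)
      have "Zd g n \<le> (\<Sum>i\<in>{0::nat,1}. exp (real n * (if i = 0 then 0 else - m)) * Pd (if i = 0 then G else UNIV) n)"
      proof (rule Zd_le[OF n1])
        fix y' :: real assume y': "0 \<le> y'" "y' \<le> 1"
        show "\<exists>i\<in>{0::nat,1}. y' \<in> (if i = 0 then G else UNIV) \<and> g y' \<le> (if i = 0 then 0 else - m)"
        proof (cases "dist y' x < rho")
          case True
          have "y' \<in> G" using rG[OF _ True] y' by auto
          moreover have "g y' \<le> 0" unfolding g_def using m rho by (simp add: mult_nonneg_nonneg)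
          ultimately show ?thesis by (intro bexI[of _ 0]) auto
        next
          case False
          then have "rho \<le> \<bar>y' - x\<bar>" by (simp add: dist_real_def)
          then have "1 \<le> \<bar>y' - x\<bar> / rho" using rho by (simp add: le_divide_eq)
          then have "g y' = - m" unfolding g_def by simp
          then show ?thesis by (intro bexI[of _ 1]) auto
        qed
      qed simp
      also have "\<dots> = Pd G n + exp (- (real n * m)) * Pd UNIV n" by simp
      also have "\<dots> \<le> Pd G n + exp (- (real n * m))"
        using Pd_le1[of UNIV n] by (simp add: mult_left_le)
      finally have Zle: "Zd g n \<le> Pd G n + exp (- (real n * m))" .
      have key: "- r - 2 * ep < ln (Pd G n) / real n"
      proof (cases "exp (- (real n * m)) \<le> Pd G n")
        case True
        then have "Zd g n \<le> 2 * Pd G n" using Zle by simp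
        then have "ln (Zd g n) \<le> ln (2 * Pd G n)" using Zd_pos by (subst ln_le_cancel_iff) (auto simp: Ppos)
        also have "\<dots> = ln 2 + ln (Pd G n)" using Ppos by (simp add: ln_mult)
        finally have "ln (Zd g n) / real n \<le> (ln 2 + ln (Pd G n)) / real n" by (rule divide_right_mono) simp
        then have "ln (Zd g n) / real n \<le> ln 2 / real n + ln (Pd G n) / real n" by (simp add: add_divide_distrib)
        then show ?thesis using l1 l2 Gamg by linarith
      next
        case False
        then have "Zd g n \<le> 2 * exp (- (real n * m))" using Zle by simp
        then have "ln (Zd g n) \<le> ln (2 * exp (- (real n * m)))" using Zd_pos by (subst ln_le_cancel_iff) auto
        also have "\<dots> = ln 2 - real n * m" by (simp add: ln_mult)
        finally have "ln (Zd g n) / real n \<le> (ln 2 - real n * m) / real n" by (rule divide_right_mono) simp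
        then have "ln (Zd g n) / real n \<le> ln 2 / real n - m" using np by (simp add: diff_divide_distrib)
        then show ?thesis using l1 l2 Gamg ep m_def by linarith
      qed
      then have "yr < ln (Pd G n) / real n" using ep by linarith
      then have lt: "ereal yr < ereal (ln (Pd G n) / real n)" by simp
      have e: "ereal (1 / real n) * elog (Pd G n) = ereal (ln (Pd G n) / real n)"
        using Ppos elog_term[OF n1] by simp
      show "y < ereal (1 / real n) * elog (Pd G n)" unfolding e using y1 lt by (rule less_trans)
    qed
  qed
qed

lemma ldp_lower:
  assumes G: "openin (top_of_set {0..1}) G"
  shows "- (INF x\<in>G. Rt x) \<le> liminf (\<lambda>n. ereal (1 / real n) * elog (Pd G n))"
  unfolding ereal_SUP_uminus_eq[symmetric]
  by (rule SUP_least) (rule ldp_lower_pt[OF G])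

end

theorem theorem4p1:
  fixes M :: "'a measure" and a :: "nat \<Rightarrow> real" and \<xi> :: "nat \<Rightarrow> 'a \<Rightarrow> nat"
    and H :: "nat \<Rightarrow> 'a \<Rightarrow> nat"
    and \<Gamma> :: "(real \<Rightarrow> real) \<Rightarrow> real" and R :: "real \<Rightarrow> ereal"
  assumes "prob_space M"
    and a_pos: "\<And>i. a i > 0"
    and "summable a" and "suminf a < 1"
    and "summable (\<lambda>i. real i * a i)"
    and meas: "\<And>i. \<xi> i \<in> measurable M (count_space UNIV)"
    and bin: "\<And>i \<omega>. \<omega> \<in> space M \<Longrightarrow> \<xi> i \<omega> \<in> {0, 1}"
    and cond1: "\<And>n x. n \<ge> 1 \<Longrightarrow> (\<forall>i. x i \<in> {0::nat, 1}) \<Longrightarrow>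
        measure M {\<omega> \<in> space M. \<xi> n \<omega> = 1 \<and> (\<forall>i\<in>{1..n-1}. \<xi> i \<omega> = x i)}
        = (a 0 + (\<Sum>i=1..n-1. a (n - i) * real (x i)))
          * measure M {\<omega> \<in> space M. \<forall>i\<in>{1..n-1}. \<xi> i \<omega> = x i}"
    and cond0: "\<And>n x. n \<ge> 1 \<Longrightarrow> (\<forall>i. x i \<in> {0::nat, 1}) \<Longrightarrow>
        measure M {\<omega> \<in> space M. \<xi> n \<omega> = 0 \<and> (\<forall>i\<in>{1..n-1}. \<xi> i \<omega> = x i)}
        = (1 - (a 0 + (\<Sum>i=1..n-1. a (n - i) * real (x i))))
          * measure M {\<omega> \<in> space M. \<forall>i\<in>{1..n-1}. \<xi> i \<omega> = x i}"
    and H_def: "\<And>n \<omega>. H n \<omega> = (\<Sum>i=1..n. \<xi> i \<omega>)"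
    and \<Gamma>_def: "\<And>g. \<Gamma> g = lim (\<lambda>n. ln (integral\<^sup>L M (\<lambda>\<omega>. exp (real n * g (real (H n \<omega>) / real n)))) / real n)"
    and R_def: "\<And>x. R x = (SUP g\<in>{g. continuous_on {0..1} g}. ereal (g x - \<Gamma> g))"
  shows "(\<forall>g. continuous_on {0..1} g \<longrightarrow>
            (\<lambda>n. ln (integral\<^sup>L M (\<lambda>\<omega>. exp (real n * g (real (H n \<omega>) / real n)))) / real n)
              \<longlonglongrightarrow> \<Gamma> g)
       \<and> good_rate_function R
       \<and> (\<forall>F. closedin (top_of_set {0..1}) F \<longrightarrow>
            limsup (\<lambda>n. ereal (1 / real n) * elog (measure M {\<omega> \<in> space M. real (H n \<omega>) / real n \<in> F}))
              \<le> - (INF x\<in>F. R x))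
       \<and> (\<forall>G. openin (top_of_set {0..1}) G \<longrightarrow>
            liminf (\<lambda>n. ereal (1 / real n) * elog (measure M {\<omega> \<in> space M. real (H n \<omega>) / real n \<in> G}))
              \<ge> - (INF x\<in>G. R x))"
proof -
  have loc: "dthp a M \<xi>"
    unfolding dthp_def dthp_axioms_def dpar_def using assms by blast
  interpret dthp a M \<xi> by (rule loc)
  have hH: "H n \<omega> = hs n (pth n \<omega>)" for n \<omega> using H_def hs_pth by simp
  have Zlink: "integral\<^sup>L M (\<lambda>\<omega>. exp (real n * g (real (H n \<omega>) / real n))) = Zd g n" for g n
    unfolding hH Zd_def by (rule integral_pth)
  have Plink: "measure M {\<omega> \<in> space M. real (H n \<omega>) / real n \<in> S} = Pd S n" for S n
    unfolding hH Pd_def by (rule measure_pth)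
  have GG: "\<Gamma> g = Gam g" for g unfolding \<Gamma>_def Zlink Gam_def ..
  have RR: "R = Rt" unfolding Rt_def by (rule ext) (simp add: R_def GG)
  show ?thesis
    unfolding Zlink Plink GG RR
    using Gam_lim Rt_good ldp_upper ldp_lower by blast
qed

end
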